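(* Let $m\ge 2$ and $\alpha\in[0,1]$. For elections with $m$ alternatives, the price of ignoring intensities under voluntary elicitation satisfies $$\mathsf{PoII}^v(\alpha)\ge\frac{3}{2\alpha^{\lfloor m/2\rfloor}+1}.$$
   Context: An election $\mathcal E=(N,A,\vec\sigma)$ has agents $N$, alternatives $A$ with $|A|=m$, and $\sigma_i=(\pi_i,\Join_i)$, where $\pi_i:[m]\to A$ is a bijection ($\pi_i(1)$ most preferred) and $\Join_i:[m-1]\to\{\succ,\succ\!\!\succ\}$. We write $\vec\pi$ for the ranking part of the profile. A metric $d$ on $N\cup A$ is nonnegative and symmetric, satisfies the triangle inequality, and has $d(x,x)=0$. The profile $\vec\sigma$ is $\alpha$-consistent with $d$ under voluntary elicitation if: - every agent $i$ has $d(i,\pi_i(j))\le d(i,\pi_i(j+1))$ for all $j\in[m-1]$; - whenever $\Join_i(j)=\,\succ\!\!\succ$, we have $d(i,\pi_i(j))\le\alpha\, d(i,\pi_i(j+1))$. Let $\mathsf{dist}^v_\alpha(a,\mathcal E)=\sup_d\sum_i d(i,a)/\min_b\sum_i d(i,b)$, with the supremum over metrics $d$ with which $\vec\sigma$ is $\alpha$-consistent under voluntary elicitation. The price of ignoring intensities is defined as follows. - $\mathsf{PoII}^v(a,\mathcal E,\alpha)=\mathsf{dist}^v_\alpha(a,\mathcal E)/\min_{b\in A}\mathsf{dist}^v_\alpha(b,\mathcal E)$. - $\mathsf{PoII}^v(a,\vec\pi,\alpha)=\max_{\mathcal E}\mathsf{PoII}^v(a,\mathcal E,\alpha)$, where the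 maximum is over elections with the same agents and alternatives and ranking part $\vec\pi$ (with arbitrary intensities). - $\mathrm{opt}^{v\text{-}\mathrm{ob}}_\alpha(\vec\pi)\in\arg\min_a\mathsf{PoII}^v(a,\vec\pi,\alpha)$. - $\mathsf{PoII}^v(\mathcal E,\alpha)=\mathsf{PoII}^v(\mathrm{opt}^{v\text{-}\mathrm{ob}}_\alpha(\vec\pi),\mathcal E,\alpha)$. - $\mathsf{PoII}^v(\alpha)=\sup_{\mathcal E}\mathsf{PoII}^v(\mathcal E,\alpha)$ over all elections with $m$ alternatives. *)

theory Defs
  imports "HOL-Analysis.Analysis" "HOL-Library.Extended_Real"
begin

text \<open>Elections: agents are 0..<n, alternatives are 0..<m.
  A profile consists of rankings p :: nat => nat => nat, where p i is a bijection
  from positions 1..m onto the alternatives (p i 1 is most preferred), and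
  intensities J :: nat => nat => bool, where J i j (for j in 1..m-1) is True iff the
  j-th separator of agent i is the strong one (succ succ), False iff it is succ.
  Metrics live on the disjoint union N + A, encoded as nat + nat (Inl = agent,
  Inr = alternative).\<close>

definition valid_ranking :: "nat \<Rightarrow> nat \<Rightarrow> (nat \<Rightarrow> nat \<Rightarrow> nat) \<Rightarrow> bool" where
  "valid_ranking n m p \<longleftrightarrow> (\<forall>i<n. bij_betw (p i) {1..m} {..<m})"

definition points :: "nat \<Rightarrow> nat \<Rightarrow> (nat + nat) set" where
  "points n m = Inl ` {..<n} \<union> Inr ` {..<m}"

definition is_metric_on :: "(nat + nat) set \<Rightarrow> (nat + nat \<Rightarrow> nat + nat \<Rightarrow> real) \<Rightarrow> bool" where
  "is_metric_on S d \<longleftrightarrow>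
     (\<forall>x\<in>S. \<forall>y\<in>S. 0 \<le> d x y \<and> d x y = d y x) \<and>
     (\<forall>x\<in>S. d x x = 0) \<and>
     (\<forall>x\<in>S. \<forall>y\<in>S. \<forall>z\<in>S. d x z \<le> d x y + d y z)"

definition consistent_v ::
  "real \<Rightarrow> nat \<Rightarrow> nat \<Rightarrow> (nat \<Rightarrow> nat \<Rightarrow> nat) \<Rightarrow> (nat \<Rightarrow> nat \<Rightarrow> bool)
   \<Rightarrow> (nat + nat \<Rightarrow> nat + nat \<Rightarrow> real) \<Rightarrow> bool" where
  "consistent_v \<alpha> n m p J d \<longleftrightarrow>
     is_metric_on (points n m) d \<and>
     (\<forall>i<n. \<forall>j\<in>{1..<m}. d (Inl i) (Inr (p i j)) \<le> d (Inl i) (Inr (p i (j+1)))) \<and>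
     (\<forall>i<n. \<forall>j\<in>{1..<m}. J i j \<longrightarrow>
        d (Inl i) (Inr (p i j)) \<le> \<alpha> * d (Inl i) (Inr (p i (j+1))))"

definition social_cost :: "nat \<Rightarrow> (nat + nat \<Rightarrow> nat + nat \<Rightarrow> real) \<Rightarrow> nat \<Rightarrow> real" where
  "social_cost n d a = (\<Sum>i<n. d (Inl i) (Inr a))"

definition opt_cost :: "nat \<Rightarrow> nat \<Rightarrow> (nat + nat \<Rightarrow> nat + nat \<Rightarrow> real) \<Rightarrow> real" where
  "opt_cost n m d = Min (social_cost n d ` {..<m})"

definition cost_ratio :: "real \<Rightarrow> real \<Rightarrow> ereal" where
  "cost_ratio x y = (if y > 0 then ereal (x / y) else if x = 0 then 1 else \<infinity>)"

definition distortion_v ::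
  "real \<Rightarrow> nat \<Rightarrow> nat \<Rightarrow> (nat \<Rightarrow> nat \<Rightarrow> nat) \<Rightarrow> (nat \<Rightarrow> nat \<Rightarrow> bool) \<Rightarrow> nat \<Rightarrow> ereal" where
  "distortion_v \<alpha> n m p J a =
     Sup {cost_ratio (social_cost n d a) (opt_cost n m d) | d. consistent_v \<alpha> n m p J d}"

definition PoII_election ::
  "real \<Rightarrow> nat \<Rightarrow> nat \<Rightarrow> (nat \<Rightarrow> nat \<Rightarrow> nat) \<Rightarrow> (nat \<Rightarrow> nat \<Rightarrow> bool) \<Rightarrow> nat \<Rightarrow> ereal" where
  "PoII_election \<alpha> n m p J a =
     distortion_v \<alpha> n m p J a / Min ((\<lambda>b. distortion_v \<alpha> n m p J b) ` {..<m})"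

definition PoII_ranking ::
  "real \<Rightarrow> nat \<Rightarrow> nat \<Rightarrow> (nat \<Rightarrow> nat \<Rightarrow> nat) \<Rightarrow> nat \<Rightarrow> ereal" where
  "PoII_ranking \<alpha> n m p a = (SUP J. PoII_election \<alpha> n m p J a)"

definition is_opt_ob ::
  "real \<Rightarrow> nat \<Rightarrow> nat \<Rightarrow> (nat \<Rightarrow> nat \<Rightarrow> nat) \<Rightarrow> nat \<Rightarrow> bool" where
  "is_opt_ob \<alpha> n m p a \<longleftrightarrow>
     a < m \<and> (\<forall>b<m. PoII_ranking \<alpha> n m p a \<le> PoII_ranking \<alpha> n m p b)"

text \<open>PoII^v(alpha) for m alternatives, with respect to a selection rule opt mapping
  (number of agents, ranking profile) to an alternative.\<close>
definition PoII_v ::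
  "real \<Rightarrow> nat \<Rightarrow> (nat \<Rightarrow> (nat \<Rightarrow> nat \<Rightarrow> nat) \<Rightarrow> nat) \<Rightarrow> ereal" where
  "PoII_v \<alpha> m opt =
     Sup {PoII_election \<alpha> n m p J (opt n p) | n p J. n \<ge> 1 \<and> valid_ranking n m p}"

end

theory Submission
  imports Defs
begin

definition pr :: "nat \<Rightarrow> nat \<Rightarrow> nat \<Rightarrow> nat" where
  "pr m i j = (if i = 0 then j - 1 else if j \<le> m div 2 then j + m div 2 - 1
      else if j \<le> 2 * (m div 2) then j - m div 2 - 1 else j - 1)"

definition pos1 :: "nat \<Rightarrow> nat \<Rightarrow> nat" where
  "pos1 m a = (if a < m div 2 then a + m div 2 + 1 else if a < 2 * (m div 2) then a - m div 2 + 1 else a + 1)"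

lemma pr_valid: assumes "m \<ge> 2" shows "valid_ranking 2 m (pr m)"
proof -
  have b0: "bij_betw (pr m 0) {1..m} {..<m}"
    by (rule bij_betw_byWitness[where f'="\<lambda>a. a + 1"]) (auto simp: pr_def)
  have b1: "bij_betw (pr m 1) {1..m} {..<m}"
    by (rule bij_betw_byWitness[where f'="pos1 m"]) (auto simp: pr_def pos1_def)
  show ?thesis unfolding valid_ranking_def
    using b0 b1 by (auto simp: less_Suc_eq numeral_2_eq_2)
qed

lemma chain_mono:
  fixes f :: "nat \<Rightarrow> real"
  assumes "\<forall>j\<in>{1..<m}. f j \<le> f (j+1)" "1 \<le> j" "j \<le> j'" "j' \<le> m"
  shows "f j \<le> f j'"
  using assms(3,4)
proof (induction j' rule: dec_induct)
  case base then show ?case by simp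
next
  case (step t)
  then have "f t \<le> f (t+1)" using assms(1,2) by auto
  with step show ?case by simp
qed

lemma chain_strong:
  fixes f :: "nat \<Rightarrow> real"
  assumes "\<forall>j\<in>{1..k}. f j \<le> \<alpha> * f (j+1)" "\<forall>j\<in>{1..k+1}. f j \<ge> 0" "0 \<le> \<alpha>"
  shows "f 1 \<le> \<alpha>^k * f (k+1)"
proof -
  have "\<forall>t\<le>k. f 1 \<le> \<alpha>^t * f (t+1)"
  proof (intro allI impI)
    fix t assume "t \<le> k" then show "f 1 \<le> \<alpha>^t * f (t+1)"
    proof (induction t)
      case 0 then show ?case by simp
    next
      case (Suc t)
      then have ih: "f 1 \<le> \<alpha>^t * f (t+1)" by simp
      have "f (t+1) \<le> \<alpha> * f (t+2)" using assms(1) Suc.prems by auto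
      then have "\<alpha>^t * f (t+1) \<le> \<alpha>^t * (\<alpha> * f (t+2))"
        by (rule mult_left_mono) (simp add: assms(3))
      with ih have "f 1 \<le> \<alpha>^t * (\<alpha> * f (t+2))" by linarith
      then show ?case by (simp add: mult_ac)
    qed
  qed
  then show ?thesis by simp
qed

definition JA :: "nat \<Rightarrow> nat \<Rightarrow> nat \<Rightarrow> bool" where
  "JA m i j = (i = 1 \<and> j \<le> m div 2)"
definition JB :: "nat \<Rightarrow> nat \<Rightarrow> nat \<Rightarrow> bool" where
  "JB m i j = (i = 0 \<and> j \<le> m div 2)"

lemma cost2: "social_cost 2 d a = d (Inl 0) (Inr a) + d (Inl 1) (Inr a)"
  by (simp add: social_cost_def numeral_2_eq_2)

lemma arith_core:
  fixes go gc zo zc \<beta> :: real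
  assumes "go \<le> zo + zc + gc" "gc \<le> \<beta> * zc" "0 \<le> zo" "0 \<le> zc" "0 \<le> \<beta>"
  shows "go + gc \<le> (1 + 2*\<beta>) * (zo + zc)"
proof -
  have "0 \<le> \<beta> * zo" "0 \<le> \<beta> * zc" using assms by simp_all
  moreover have "(1 + 2*\<beta>) * (zo + zc) = zo + zc + 2*(\<beta>*zo) + 2*(\<beta>*zc)" by (simp add: algebra_simps)
  ultimately show ?thesis using assms by linarith
qed

lemma arith_pareto:
  fixes go gc zo zc \<beta> :: real
  assumes "go \<le> zo" "gc \<le> zc" "0 \<le> zo" "0 \<le> zc" "0 \<le> \<beta>"
  shows "go + gc \<le> (1 + 2*\<beta>) * (zo + zc)"
proof -
  have "0 \<le> \<beta> * zo" "0 \<le> \<beta> * zc" using assms by simp_all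
  moreover have "(1 + 2*\<beta>) * (zo + zc) = zo + zc + 2*(\<beta>*zo) + 2*(\<beta>*zc)" by (simp add: algebra_simps)
  ultimately show ?thesis using assms by linarith
qed

lemma metric_facts:
  assumes "is_metric_on (points 2 m) d" "a < m" "b < m" "i < 2" "i' < 2"
  shows "0 \<le> d (Inl i) (Inr a)"
    and "d (Inl i) (Inr a) \<le> d (Inl i) (Inr b) + d (Inl i') (Inr b) + d (Inl i') (Inr a)"
proof -
  have P: "Inl i \<in> points 2 m" "Inl i' \<in> points 2 m" "Inr a \<in> points 2 m" "Inr b \<in> points 2 m"
    using assms by (auto simp: points_def)
  show "0 \<le> d (Inl i) (Inr a)" using assms(1) P unfolding is_metric_on_def by blast
  have t1: "d (Inl i) (Inr a) \<le> d (Inl i) (Inr b) + d (Inr b) (Inr a)"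
    using assms(1) P unfolding is_metric_on_def by blast
  have t2: "d (Inr b) (Inr a) \<le> d (Inr b) (Inl i') + d (Inl i') (Inr a)"
    using assms(1) P unfolding is_metric_on_def by blast
  have s: "d (Inr b) (Inl i') = d (Inl i') (Inr b)"
    using assms(1) P unfolding is_metric_on_def by metis
  show "d (Inl i) (Inr a) \<le> d (Inl i) (Inr b) + d (Inl i') (Inr b) + d (Inl i') (Inr a)"
    using t1 t2 s by linarith
qed

lemma pr0: "pr m 0 j = j - 1" by (simp add: pr_def)
lemma pr1_pos1: "a < m \<Longrightarrow> pr m 1 (pos1 m a) = a" by (auto simp: pr_def pos1_def)
lemma pos1_range: "a < m \<Longrightarrow> 1 \<le> pos1 m a \<and> pos1 m a \<le> m" by (auto simp: pos1_def)
lemma pr1_range: "1 \<le> j \<Longrightarrow> j \<le> m \<Longrightarrow> pr m 1 j < m" by (auto simp: pr_def)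

lemma ubA:
  assumes m: "m \<ge> 2" and al: "0 \<le> \<alpha>" and c: "consistent_v \<alpha> 2 m (pr m) (JA m) d" and z: "z < m"
  shows "social_cost 2 d (m div 2) \<le> (1 + 2 * \<alpha>^(m div 2)) * social_cost 2 d z"
proof -
  define k where "k = m div 2"
  have k1: "1 \<le> k" and km: "2*k \<le> m" using m unfolding k_def by auto
  have met: "is_metric_on (points 2 m) d" using c unfolding consistent_v_def by blast
  define f1 where "f1 j = d (Inl 1) (Inr (pr m 1 j))" for j
  define f0 where "f0 j = d (Inl 0) (Inr (pr m 0 j))" for j
  have mono1: "\<forall>j\<in>{1..<m}. f1 j \<le> f1 (j+1)" using c unfolding consistent_v_def f1_def by auto
  have mono0: "\<forall>j\<in>{1..<m}. f0 j \<le> f0 (j+1)" using c unfolding consistent_v_def f0_def by auto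
  have strong: "\<forall>j\<in>{1..k}. f1 j \<le> \<alpha> * f1 (j+1)"
  proof
    fix j assume j: "j \<in> {1..k}"
    then have "j \<in> {1..<m}" "JA m 1 j" using km k1 unfolding JA_def k_def by auto
    then show "f1 j \<le> \<alpha> * f1 (j+1)" using c unfolding consistent_v_def f1_def by auto
  qed
  have nn1: "\<forall>j\<in>{1..k+1}. f1 j \<ge> 0"
  proof
    fix j assume "j \<in> {1..k+1}"
    then have "pr m 1 j < m" using km k1 by (intro pr1_range) auto
    then show "f1 j \<ge> 0" using metric_facts(1)[OF met _ _ _ _, of "pr m 1 j" "pr m 1 j" 1 1] unfolding f1_def by simp
  qed
  have y1: "f1 1 = d (Inl 1) (Inr k)" using k1 unfolding f1_def pr_def k_def by auto
  have x1: "f1 (k+1) = d (Inl 1) (Inr 0)" using k1 unfolding f1_def pr_def k_def by auto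
  have zz: "f1 (pos1 m z) = d (Inl 1) (Inr z)" unfolding f1_def using pr1_pos1[OF z] by simp
  have n0: "0 \<le> d (Inl 0) (Inr z)" and n1: "0 \<le> d (Inl 1) (Inr z)"
    using metric_facts(1)[OF met z z, of 0 0] metric_facts(1)[OF met z z, of 1 1] by auto
  have kk: "k < m" using km k1 by linarith
  have "d (Inl 0) (Inr k) + d (Inl 1) (Inr k) \<le> (1 + 2 * \<alpha>^k) * (d (Inl 0) (Inr z) + d (Inl 1) (Inr z))"
  proof (cases "k \<le> z \<and> z < 2*k")
    case True
    have "f0 (k+1) \<le> f0 (z+1)" using chain_mono[OF mono0, of "k+1" "z+1"] True z by auto
    then have a: "d (Inl 0) (Inr k) \<le> d (Inl 0) (Inr z)" unfolding f0_def pr0 by simp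
    have "f1 1 \<le> f1 (pos1 m z)" using chain_mono[OF mono1, of 1 "pos1 m z"] pos1_range[OF z] by auto
    then have b: "d (Inl 1) (Inr k) \<le> d (Inl 1) (Inr z)" using y1 zz by simp
    show ?thesis by (rule arith_pareto[OF a b n0 n1]) (simp add: al)
  next
    case False
    then have pz: "k + 1 \<le> pos1 m z" unfolding pos1_def k_def by auto
    have "f1 (k+1) \<le> f1 (pos1 m z)" using chain_mono[OF mono1 _ pz] pos1_range[OF z] by auto
    then have "\<alpha>^k * f1 (k+1) \<le> \<alpha>^k * f1 (pos1 m z)" by (rule mult_left_mono) (simp add: al)
    moreover have "f1 1 \<le> \<alpha>^k * f1 (k+1)" by (rule chain_strong[OF strong nn1 al])
    ultimately have b: "d (Inl 1) (Inr k) \<le> \<alpha>^k * d (Inl 1) (Inr z)" using y1 zz by simp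
    have a: "d (Inl 0) (Inr k) \<le> d (Inl 0) (Inr z) + d (Inl 1) (Inr z) + d (Inl 1) (Inr k)"
      using metric_facts(2)[OF met kk z, of 0 1] by simp
    show ?thesis by (rule arith_core[OF a b n0 n1]) (simp add: al)
  qed
  then show ?thesis unfolding cost2 k_def .
qed


lemma ubB:
  assumes m: "m \<ge> 2" and al: "0 \<le> \<alpha>" and c: "consistent_v \<alpha> 2 m (pr m) (JB m) d" and z: "z < m"
  shows "social_cost 2 d 0 \<le> (1 + 2 * \<alpha>^(m div 2)) * social_cost 2 d z"
proof -
  define k where "k = m div 2"
  have k1: "1 \<le> k" and km: "2*k \<le> m" using m unfolding k_def by auto
  have met: "is_metric_on (points 2 m) d" using c unfolding consistent_v_def by blast
  define f1 where "f1 j = d (Inl 1) (Inr (pr m 1 j))" for j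
  define f0 where "f0 j = d (Inl 0) (Inr (pr m 0 j))" for j
  have mono1: "\<forall>j\<in>{1..<m}. f1 j \<le> f1 (j+1)" using c unfolding consistent_v_def f1_def by auto
  have mono0: "\<forall>j\<in>{1..<m}. f0 j \<le> f0 (j+1)" using c unfolding consistent_v_def f0_def by auto
  have strong: "\<forall>j\<in>{1..k}. f0 j \<le> \<alpha> * f0 (j+1)"
  proof
    fix j assume j: "j \<in> {1..k}"
    then have "j \<in> {1..<m}" "JB m 0 j" using km k1 unfolding JB_def k_def by auto
    then show "f0 j \<le> \<alpha> * f0 (j+1)" using c unfolding consistent_v_def f0_def by auto
  qed
  have nn0: "\<forall>j\<in>{1..k+1}. f0 j \<ge> 0"
  proof
    fix j assume "j \<in> {1..k+1}"
    then have "pr m 0 j < m" using km k1 by (auto simp: pr0)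
    then show "f0 j \<ge> 0" using metric_facts(1)[OF met _ _ _ _, of "pr m 0 j" "pr m 0 j" 0 0] unfolding f0_def by simp
  qed
  have x0: "f0 1 = d (Inl 0) (Inr 0)" unfolding f0_def pr0 by simp
  have x1: "f1 (k+1) = d (Inl 1) (Inr 0)" using k1 unfolding f1_def pr_def k_def by auto
  have zz: "f1 (pos1 m z) = d (Inl 1) (Inr z)" unfolding f1_def using pr1_pos1[OF z] by simp
  have zz0: "f0 (z+1) = d (Inl 0) (Inr z)" unfolding f0_def pr0 by simp
  have n0: "0 \<le> d (Inl 0) (Inr z)" and n1: "0 \<le> d (Inl 1) (Inr z)"
    using metric_facts(1)[OF met z z, of 0 0] metric_facts(1)[OF met z z, of 1 1] by auto
  have m0: "0 < m" using m by simp
  have "d (Inl 1) (Inr 0) + d (Inl 0) (Inr 0) \<le> (1 + 2 * \<alpha>^k) * (d (Inl 1) (Inr z) + d (Inl 0) (Inr z))"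
  proof (cases "z < k")
    case True
    have "f1 (k+1) \<le> f1 (pos1 m z)" using chain_mono[OF mono1, of "k+1" "pos1 m z"] True pos1_range[OF z]
      unfolding pos1_def k_def by auto
    then have a: "d (Inl 1) (Inr 0) \<le> d (Inl 1) (Inr z)" using x1 zz by simp
    have "f0 1 \<le> f0 (z+1)" using chain_mono[OF mono0, of 1 "z+1"] z by auto
    then have b: "d (Inl 0) (Inr 0) \<le> d (Inl 0) (Inr z)" using x0 zz0 by simp
    show ?thesis by (rule arith_pareto[OF a b n1 n0]) (simp add: al)
  next
    case False
    have "f0 (k+1) \<le> f0 (z+1)" using chain_mono[OF mono0, of "k+1" "z+1"] False z by auto
    then have "\<alpha>^k * f0 (k+1) \<le> \<alpha>^k * f0 (z+1)" by (rule mult_left_mono) (simp add: al)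
    moreover have "f0 1 \<le> \<alpha>^k * f0 (k+1)" by (rule chain_strong[OF strong nn0 al])
    ultimately have b: "d (Inl 0) (Inr 0) \<le> \<alpha>^k * d (Inl 0) (Inr z)" using x0 zz0 by simp
    have a: "d (Inl 1) (Inr 0) \<le> d (Inl 1) (Inr z) + d (Inl 0) (Inr z) + d (Inl 0) (Inr 0)"
      using metric_facts(2)[OF met m0 z, of 1 0] by simp
    show ?thesis by (rule arith_core[OF a b n1 n0]) (simp add: al)
  qed
  then show ?thesis unfolding cost2 k_def by (simp add: add.commute)
qed

lemma cost_nonneg:
  assumes "is_metric_on (points 2 m) d" "a < m"
  shows "0 \<le> social_cost 2 d a"
  using metric_facts(1)[OF assms assms(2), of 0 0] metric_facts(1)[OF assms assms(2), of 1 1]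
  unfolding cost2 by simp

lemma dist_ub:
  assumes m: "m \<ge> 1" and C: "C \<ge> 1"
    and H: "\<And>d z. consistent_v \<alpha> 2 m p J d \<Longrightarrow> z < m \<Longrightarrow> social_cost 2 d g \<le> C * social_cost 2 d z"
    and g: "g < m"
  shows "distortion_v \<alpha> 2 m p J g \<le> ereal C"
  unfolding distortion_v_def
proof (rule Sup_least)
  fix r assume "r \<in> {cost_ratio (social_cost 2 d g) (opt_cost 2 m d) | d. consistent_v \<alpha> 2 m p J d}"
  then obtain d where r: "r = cost_ratio (social_cost 2 d g) (opt_cost 2 m d)"
    and c: "consistent_v \<alpha> 2 m p J d" by blast
  have met: "is_metric_on (points 2 m) d" using c unfolding consistent_v_def by blast
  have "opt_cost 2 m d \<in> social_cost 2 d ` {..<m}" unfolding opt_cost_def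
  proof (rule Min_in)
    have "0 \<in> {..<m}" using m by simp
    then show "social_cost 2 d ` {..<m} \<noteq> {}" by blast
  qed simp
  then obtain z where z: "z < m" and oz: "opt_cost 2 m d = social_cost 2 d z" by auto
  have le: "social_cost 2 d g \<le> C * opt_cost 2 m d" using H[OF c z] oz by simp
  have gnn: "0 \<le> social_cost 2 d g" by (rule cost_nonneg[OF met g])
  have onn: "0 \<le> opt_cost 2 m d" using oz cost_nonneg[OF met z] by simp
  show "r \<le> ereal C"
  proof (cases "opt_cost 2 m d > 0")
    case True
    then have "social_cost 2 d g / opt_cost 2 m d \<le> C" using le by (simp add: divide_le_eq)
    then show ?thesis using True r unfolding cost_ratio_def by simp
  next
    case False
    then have "opt_cost 2 m d = 0" using onn by simp
    then have "social_cost 2 d g = 0" using le gnn by simp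
    then show ?thesis using False r C unfolding cost_ratio_def by simp
  qed
qed

lemma dist_lb:
  assumes "consistent_v \<alpha> 2 m p J d"
  shows "cost_ratio (social_cost 2 d a) (opt_cost 2 m d) \<le> distortion_v \<alpha> 2 m p J a"
  unfolding distortion_v_def by (rule Sup_upper) (use assms in blast)

lemma dist_ge1:
  assumes "m \<ge> 1"
  shows "1 \<le> distortion_v \<alpha> 2 m p J a"
proof -
  have c: "consistent_v \<alpha> 2 m p J (\<lambda>_ _. 0)"
    unfolding consistent_v_def is_metric_on_def by simp
  have ne: "{..<m} \<noteq> {}" using assms by (metis lessThan_iff less_le_trans zero_less_one empty_iff)
  have "opt_cost 2 m (\<lambda>_ _. 0) = 0" using ne unfolding opt_cost_def social_cost_def
    by (simp add: image_constant_conv)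
  then have "cost_ratio (social_cost 2 (\<lambda>_ _. 0) a) (opt_cost 2 m (\<lambda>_ _. 0)) = 1"
    unfolding cost_ratio_def social_cost_def by simp
  then show ?thesis using dist_lb[OF c, of a] by simp
qed


lemma abs_metric: "is_metric_on S (\<lambda>u v. \<bar>f u - f v\<bar> :: real)"
  unfolding is_metric_on_def by auto

definition posA :: "nat \<Rightarrow> nat + nat \<Rightarrow> real" where
  "posA m u = (case u of Inl i \<Rightarrow> if i = 1 then 0 else 1
     | Inr a \<Rightarrow> if m div 2 \<le> a \<and> a < 2*(m div 2) then 0 else 2)"
definition posB :: "nat \<Rightarrow> nat + nat \<Rightarrow> real" where
  "posB m u = (case u of Inl i \<Rightarrow> if i = 0 then 0 else 1
     | Inr a \<Rightarrow> if a < m div 2 then 0 else 2)"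

lemma less2: "i < (2::nat) \<longleftrightarrow> i = 0 \<or> i = 1" by auto

lemma consA:
  assumes "m \<ge> 2" "0 \<le> \<alpha>"
  shows "consistent_v \<alpha> 2 m (pr m) (JA m) (\<lambda>u v. \<bar>posA m u - posA m v\<bar>)"
  unfolding consistent_v_def
proof (intro conjI)
  show "is_metric_on (points 2 m) (\<lambda>u v. \<bar>posA m u - posA m v\<bar>)" by (rule abs_metric)
  show "\<forall>i<2. \<forall>j\<in>{1..<m}. \<bar>posA m (Inl i) - posA m (Inr (pr m i j))\<bar>
      \<le> \<bar>posA m (Inl i) - posA m (Inr (pr m i (j + 1)))\<bar>"
    unfolding less2 by (auto simp: posA_def pr_def)
  show "\<forall>i<2. \<forall>j\<in>{1..<m}. JA m i j \<longrightarrow> \<bar>posA m (Inl i) - posA m (Inr (pr m i j))\<bar>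
      \<le> \<alpha> * \<bar>posA m (Inl i) - posA m (Inr (pr m i (j + 1)))\<bar>"
    using assms unfolding less2 by (auto simp: posA_def pr_def JA_def)
qed

lemma consB:
  assumes "m \<ge> 2" "0 \<le> \<alpha>"
  shows "consistent_v \<alpha> 2 m (pr m) (JB m) (\<lambda>u v. \<bar>posB m u - posB m v\<bar>)"
  unfolding consistent_v_def
proof (intro conjI)
  show "is_metric_on (points 2 m) (\<lambda>u v. \<bar>posB m u - posB m v\<bar>)" by (rule abs_metric)
  show "\<forall>i<2. \<forall>j\<in>{1..<m}. \<bar>posB m (Inl i) - posB m (Inr (pr m i j))\<bar>
      \<le> \<bar>posB m (Inl i) - posB m (Inr (pr m i (j + 1)))\<bar>"
    unfolding less2 by (auto simp: posB_def pr_def)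
  show "\<forall>i<2. \<forall>j\<in>{1..<m}. JB m i j \<longrightarrow> \<bar>posB m (Inl i) - posB m (Inr (pr m i j))\<bar>
      \<le> \<alpha> * \<bar>posB m (Inl i) - posB m (Inr (pr m i (j + 1)))\<bar>"
    using assms unfolding less2 by (auto simp: posB_def pr_def JB_def)
qed


lemma optA:
  assumes "m \<ge> 2"
  shows "opt_cost 2 m (\<lambda>u v. \<bar>posA m u - posA m v\<bar>) = 1"
    and "\<not> (m div 2 \<le> b \<and> b < 2*(m div 2)) \<Longrightarrow> social_cost 2 (\<lambda>u v. \<bar>posA m u - posA m v\<bar>) b = 3"
proof -
  have c: "\<And>a. social_cost 2 (\<lambda>u v. \<bar>posA m u - posA m v\<bar>) a
      = (if m div 2 \<le> a \<and> a < 2*(m div 2) then 1 else 3)"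
    unfolding cost2 by (simp add: posA_def)
  show "\<not> (m div 2 \<le> b \<and> b < 2*(m div 2)) \<Longrightarrow> social_cost 2 (\<lambda>u v. \<bar>posA m u - posA m v\<bar>) b = 3"
    using c by simp
  show "opt_cost 2 m (\<lambda>u v. \<bar>posA m u - posA m v\<bar>) = 1" unfolding opt_cost_def
  proof (rule Min_eqI)
    show "\<And>y. y \<in> social_cost 2 (\<lambda>u v. \<bar>posA m u - posA m v\<bar>) ` {..<m} \<Longrightarrow> 1 \<le> y"
      using c by auto
    have "m div 2 < m" "m div 2 \<le> m div 2 \<and> m div 2 < 2*(m div 2)" using assms by auto
    then show "1 \<in> social_cost 2 (\<lambda>u v. \<bar>posA m u - posA m v\<bar>) ` {..<m}"
      using c[of "m div 2"] by (metis imageI lessThan_iff)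
  qed simp
qed

lemma optB:
  assumes "m \<ge> 2"
  shows "opt_cost 2 m (\<lambda>u v. \<bar>posB m u - posB m v\<bar>) = 1"
    and "\<not> (b < m div 2) \<Longrightarrow> social_cost 2 (\<lambda>u v. \<bar>posB m u - posB m v\<bar>) b = 3"
proof -
  have c: "\<And>a. social_cost 2 (\<lambda>u v. \<bar>posB m u - posB m v\<bar>) a
      = (if a < m div 2 then 1 else 3)"
    unfolding cost2 by (simp add: posB_def)
  show "\<not> (b < m div 2) \<Longrightarrow> social_cost 2 (\<lambda>u v. \<bar>posB m u - posB m v\<bar>) b = 3"
    using c by simp
  show "opt_cost 2 m (\<lambda>u v. \<bar>posB m u - posB m v\<bar>) = 1" unfolding opt_cost_def
  proof (rule Min_eqI)
    show "\<And>y. y \<in> social_cost 2 (\<lambda>u v. \<bar>posB m u - posB m v\<bar>) ` {..<m} \<Longrightarrow> 1 \<le> y"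
      using c by auto
    have "0 < m" "0 < m div 2" using assms by auto
    then show "1 \<in> social_cost 2 (\<lambda>u v. \<bar>posB m u - posB m v\<bar>) ` {..<m}"
      using c[of 0] by (metis imageI lessThan_iff)
  qed simp
qed

lemma final_ereal:
  fixes D M :: ereal and C :: real
  assumes "3 \<le> D" "1 \<le> M" "M \<le> ereal C"
  shows "ereal (3 / C) \<le> D / M"
proof -
  obtain r where r: "M = ereal r" using assms(2,3) by (cases M) auto
  have r1: "1 \<le> r" "r \<le> C" using assms(2,3) r by auto
  show ?thesis
  proof (cases D)
    case (real t)
    have t: "3 \<le> t" using assms(1) real by simp
    have "3 / C \<le> 3 / r" using r1 by (intro divide_left_mono) auto
    also have "\<dots> \<le> t / r" using r1 t by (intro divide_right_mono) auto
    finally show ?thesis using real r r1 by simp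
  next
    case PInf then show ?thesis using r r1 by simp
  next
    case MInf then show ?thesis using assms(1) by simp
  qed
qed

lemma poII_bound:
  assumes m: "m \<ge> 2" and al: "0 \<le> \<alpha>"
    and b: "3 \<le> distortion_v \<alpha> 2 m p J b"
    and g: "g < m" "distortion_v \<alpha> 2 m p J g \<le> ereal C"
  shows "ereal (3 / C) \<le> PoII_election \<alpha> 2 m p J b"
  unfolding PoII_election_def
proof (rule final_ereal[OF b])
  have fin: "finite ((\<lambda>b. distortion_v \<alpha> 2 m p J b) ` {..<m})" by simp
  have ne: "(\<lambda>b. distortion_v \<alpha> 2 m p J b) ` {..<m} \<noteq> {}" using g by blast
  have "Min ((\<lambda>b. distortion_v \<alpha> 2 m p J b) ` {..<m}) \<in> (\<lambda>b. distortion_v \<alpha> 2 m p J b) ` {..<m}"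
    by (rule Min_in[OF fin ne])
  then show "1 \<le> Min ((\<lambda>b. distortion_v \<alpha> 2 m p J b) ` {..<m})"
    using dist_ge1[of m] m by auto
  have "Min ((\<lambda>b. distortion_v \<alpha> 2 m p J b) ` {..<m}) \<le> distortion_v \<alpha> 2 m p J g"
    by (rule Min_le[OF fin]) (use g in blast)
  then show "Min ((\<lambda>b. distortion_v \<alpha> 2 m p J b) ` {..<m}) \<le> ereal C" using g(2) by (rule order_trans)
qed

theorem theorem10:
  fixes m :: nat and \<alpha> :: real
    and opt :: "nat \<Rightarrow> (nat \<Rightarrow> nat \<Rightarrow> nat) \<Rightarrow> nat"
  assumes "m \<ge> 2" and "0 \<le> \<alpha>" and "\<alpha> \<le> 1"
    and "\<forall>n p. n \<ge> 1 \<and> valid_ranking n m p \<longrightarrow> is_opt_ob \<alpha> n m p (opt n p)"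
  shows "PoII_v \<alpha> m opt \<ge> ereal (3 / (2 * \<alpha> ^ (m div 2) + 1))"
proof -
  define k where "k = m div 2"
  define C where "C = 1 + 2 * \<alpha> ^ k"
  have C1: "C \<ge> 1" using assms(2) unfolding C_def by simp
  have v: "valid_ranking 2 m (pr m)" by (rule pr_valid[OF assms(1)])
  define b where "b = opt 2 (pr m)"
  have m1: "m \<ge> 1" using assms(1) by simp
  have key: "\<exists>J. ereal (3 / C) \<le> PoII_election \<alpha> 2 m (pr m) J b"
  proof (cases "k \<le> b \<and> b < 2*k")
    case True
    have ub: "distortion_v \<alpha> 2 m (pr m) (JB m) 0 \<le> ereal C"
      by (rule dist_ub[OF m1 C1]) (use ubB[OF assms(1,2)] assms(1) in \<open>auto simp: C_def k_def\<close>)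
    have "cost_ratio (social_cost 2 (\<lambda>u v. \<bar>posB m u - posB m v\<bar>) b) (opt_cost 2 m (\<lambda>u v. \<bar>posB m u - posB m v\<bar>))
        \<le> distortion_v \<alpha> 2 m (pr m) (JB m) b"
      by (rule dist_lb[OF consB[OF assms(1,2)]])
    moreover have "\<not> b < m div 2" using True unfolding k_def by simp
    ultimately have lb: "3 \<le> distortion_v \<alpha> 2 m (pr m) (JB m) b"
      using optB[OF assms(1)] by (simp add: cost_ratio_def)
    have "0 < m" using m1 by simp
    then show ?thesis using poII_bound[OF assms(1,2) lb _ ub] by blast
  next
    case False
    have km: "k < m" using assms(1) unfolding k_def by simp
    have ub: "distortion_v \<alpha> 2 m (pr m) (JA m) k \<le> ereal C"
      by (rule dist_ub[OF m1 C1]) (use ubA[OF assms(1,2)] km in \<open>auto simp: C_def k_def\<close>)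
    have "cost_ratio (social_cost 2 (\<lambda>u v. \<bar>posA m u - posA m v\<bar>) b) (opt_cost 2 m (\<lambda>u v. \<bar>posA m u - posA m v\<bar>))
        \<le> distortion_v \<alpha> 2 m (pr m) (JA m) b"
      by (rule dist_lb[OF consA[OF assms(1,2)]])
    moreover have "\<not> (m div 2 \<le> b \<and> b < 2*(m div 2))" using False unfolding k_def by simp
    ultimately have lb: "3 \<le> distortion_v \<alpha> 2 m (pr m) (JA m) b"
      using optA[OF assms(1)] by (simp add: cost_ratio_def)
    then show ?thesis using poII_bound[OF assms(1,2) lb km ub] by blast
  qed
  then obtain J where J: "ereal (3 / C) \<le> PoII_election \<alpha> 2 m (pr m) J b" by blast
  have "PoII_election \<alpha> 2 m (pr m) J (opt 2 (pr m))
      \<in> {PoII_election \<alpha> n m p J (opt n p) | n p J. n \<ge> 1 \<and> valid_ranking n m p}"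
    using v by fastforce
  then have "PoII_election \<alpha> 2 m (pr m) J b \<le> PoII_v \<alpha> m opt"
    unfolding PoII_v_def b_def by (rule Sup_upper)
  moreover have "3 / (2 * \<alpha> ^ (m div 2) + 1) = 3 / C" unfolding C_def k_def by simp
  ultimately show ?thesis using J by simp
qed

end
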